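(* Let $\Omega$ be a nonempty set. A binary relation $\succeq$ on $\mathfrak F(\Omega)$ is a regular stochastic order if and only if there exists a coherent, cash subadditive loss measure $\rho$ with $\rho(-1)>0$ such that for all $f,g\in\mathfrak F(\Omega)$: $f\succeq g$ if and only if $\rho(f-g)\le0$.
   Context: $\mathfrak F(\Omega)$ is the set of real-valued functions on $\Omega$; inequalities, $\wedge$ are pointwise, constants are constant functions. A regular stochastic order is a reflexive, transitive binary relation $\succeq$ on $\mathfrak F(\Omega)$ such that: (TRIV) $0\not\succeq 1$; (CONE) $f_i\succeq g_i$ and $a_i\ge0$ for $i=1,2$ imply $a_1f_1+a_2f_2\succeq a_1g_1+a_2g_2$; (CERT) $f\ge0$ implies $f\succeq0$; (APPR) if $f+2^{-n}\succeq0$ for all $n\in\mathbb N$ then $f\succeq0$; (REST) $f\succeq0$ and $A\subset\Omega$ imply $f1_A\succeq0$. A coherent, cash subadditive loss measure is a map $\rho:\mathfrak F(\Omega)\to[-\infty,\infty]$ that is (a) positively homogeneous, (b) subadditive, (c) inversely monotone ($f\le g$ implies $\rho(f)\ge\rho(g)$), (d) cash subadditive ($\rho(f+\alpha)\ge\rho(f)-\alpha$ for real $\alpha\ge0$), and (e) satisfies $\rho(f)=\rho(f\wedge0)$ for all $f$. *)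

theory Defs
  imports "HOL-Library.Extended_Real"
begin

text \<open>Omega is the (nonempty) type 'a; F(Omega) is 'a \<Rightarrow> real.
  Constants are constant functions; wedge is pointwise min.\<close>

definition regular_stochastic_order :: "(('a \<Rightarrow> real) \<Rightarrow> ('a \<Rightarrow> real) \<Rightarrow> bool) \<Rightarrow> bool" where
  "regular_stochastic_order R \<longleftrightarrow>
     (\<forall>f. R f f) \<and>
     (\<forall>f g h. R f g \<longrightarrow> R g h \<longrightarrow> R f h) \<and>
     \<not> R (\<lambda>_. 0) (\<lambda>_. 1) \<and>
     (\<forall>f1 g1 f2 g2 (a1::real) (a2::real). R f1 g1 \<longrightarrow> R f2 g2 \<longrightarrow> a1 \<ge> 0 \<longrightarrow> a2 \<ge> 0 \<longrightarrow>
        R (\<lambda>x. a1 * f1 x + a2 * f2 x) (\<lambda>x. a1 * g1 x + a2 * g2 x)) \<and>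
     (\<forall>f. (\<forall>x. f x \<ge> 0) \<longrightarrow> R f (\<lambda>_. 0)) \<and>
     (\<forall>f. (\<forall>n::nat. R (\<lambda>x. f x + (1/2)^n) (\<lambda>_. 0)) \<longrightarrow> R f (\<lambda>_. 0)) \<and>
     (\<forall>f A. R f (\<lambda>_. 0) \<longrightarrow> R (\<lambda>x. if x \<in> A then f x else 0) (\<lambda>_. 0))"

definition coherent_cash_subadditive_loss_measure :: "(('a \<Rightarrow> real) \<Rightarrow> ereal) \<Rightarrow> bool" where
  "coherent_cash_subadditive_loss_measure \<rho> \<longleftrightarrow>
     (\<forall>f (a::real). a \<ge> 0 \<longrightarrow> \<rho> (\<lambda>x. a * f x) = ereal a * \<rho> f) \<and>
     (\<forall>f g. \<rho> (\<lambda>x. f x + g x) \<le> \<rho> f + \<rho> g) \<and>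
     (\<forall>f g. (\<forall>x. f x \<le> g x) \<longrightarrow> \<rho> f \<ge> \<rho> g) \<and>
     (\<forall>f (\<alpha>::real). \<alpha> \<ge> 0 \<longrightarrow> \<rho> (\<lambda>x. f x + \<alpha>) \<ge> \<rho> f - ereal \<alpha>) \<and>
     (\<forall>f. \<rho> f = \<rho> (\<lambda>x. min (f x) 0))"

end

theory Submission imports Defs begin

lemma ereal_mult_nonpos: "(a::real) \<ge> 0 \<Longrightarrow> (x::ereal) \<le> 0 \<Longrightarrow> ereal a * x \<le> 0"
  by (cases x) (auto simp: mult_nonneg_nonpos)

lemma dir2:
  fixes \<rho> :: "('a \<Rightarrow> real) \<Rightarrow> ereal" and R
  assumes C: "coherent_cash_subadditive_loss_measure \<rho>" and pos: "\<rho> (\<lambda>_. -1) > 0"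
    and RR: "\<forall>f g. R f g \<longleftrightarrow> \<rho> (\<lambda>x. f x - g x) \<le> 0"
  shows "regular_stochastic_order R"
proof -
  have hom: "\<And>f a. a \<ge> 0 \<Longrightarrow> \<rho> (\<lambda>x. a * f x) = ereal a * \<rho> f"
   and sub: "\<And>f g. \<rho> (\<lambda>x. f x + g x) \<le> \<rho> f + \<rho> g"
   and mon: "\<And>f g. (\<forall>x. f x \<le> g x) \<Longrightarrow> \<rho> f \<ge> \<rho> g"
   and cash: "\<And>f \<alpha>. \<alpha> \<ge> 0 \<Longrightarrow> \<rho> (\<lambda>x. f x + \<alpha>) \<ge> \<rho> f - ereal \<alpha>"
   and mn: "\<And>f. \<rho> f = \<rho> (\<lambda>x. min (f x) 0)"
    using C unfolding coherent_cash_subadditive_loss_measure_def by blast+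
  have z: "\<rho> (\<lambda>_. 0) = 0"
    using hom[of 0 "\<lambda>_. 0"] by (simp add: zero_ereal_def[symmetric])
  have refl: "\<forall>f. R f f" using RR z by simp
  have trans: "\<forall>f g h. R f g \<longrightarrow> R g h \<longrightarrow> R f h"
  proof (intro allI impI)
    fix f g h assume "R f g" "R g h"
    hence a: "\<rho> (\<lambda>x. f x - g x) \<le> 0" "\<rho> (\<lambda>x. g x - h x) \<le> 0" using RR by auto
    have "\<rho> (\<lambda>x. f x - h x) = \<rho> (\<lambda>x. (f x - g x) + (g x - h x))" by simp
    also have "\<dots> \<le> \<rho> (\<lambda>x. f x - g x) + \<rho> (\<lambda>x. g x - h x)" by (rule sub)
    also have "\<dots> \<le> 0 + 0" by (rule add_mono[OF a])
    finally show "R f h" using RR by simp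
  qed
  have triv: "\<not> R (\<lambda>_. 0) (\<lambda>_. 1)" using RR pos by simp
  have cone: "\<forall>f1 g1 f2 g2 (a1::real) (a2::real). R f1 g1 \<longrightarrow> R f2 g2 \<longrightarrow> a1 \<ge> 0 \<longrightarrow> a2 \<ge> 0 \<longrightarrow>
        R (\<lambda>x. a1 * f1 x + a2 * f2 x) (\<lambda>x. a1 * g1 x + a2 * g2 x)"
  proof (intro allI impI)
    fix f1 g1 f2 g2 and a1 a2 :: real
    assume "R f1 g1" "R f2 g2" and a: "a1 \<ge> 0" "a2 \<ge> 0"
    hence b: "\<rho> (\<lambda>x. f1 x - g1 x) \<le> 0" "\<rho> (\<lambda>x. f2 x - g2 x) \<le> 0" using RR by auto
    have "\<rho> (\<lambda>x. (a1 * f1 x + a2 * f2 x) - (a1 * g1 x + a2 * g2 x))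
        = \<rho> (\<lambda>x. a1 * (f1 x - g1 x) + a2 * (f2 x - g2 x))" by (simp add: algebra_simps)
    also have "\<dots> \<le> \<rho> (\<lambda>x. a1 * (f1 x - g1 x)) + \<rho> (\<lambda>x. a2 * (f2 x - g2 x))" by (rule sub)
    also have "\<dots> = ereal a1 * \<rho> (\<lambda>x. f1 x - g1 x) + ereal a2 * \<rho> (\<lambda>x. f2 x - g2 x)"
      using hom a by simp
    also have "\<dots> \<le> 0 + 0" by (intro add_mono ereal_mult_nonpos a b)
    finally show "R (\<lambda>x. a1 * f1 x + a2 * f2 x) (\<lambda>x. a1 * g1 x + a2 * g2 x)" using RR by simp
  qed
  have cert: "\<forall>f. (\<forall>x. f x \<ge> 0) \<longrightarrow> R f (\<lambda>_. 0)"
  proof (intro allI impI)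
    fix f :: "'a \<Rightarrow> real" assume "\<forall>x. f x \<ge> 0"
    hence "\<rho> (\<lambda>x. f x - 0) \<le> \<rho> (\<lambda>_. 0)" by (intro mon) simp
    thus "R f (\<lambda>_. 0)" using RR z by simp
  qed
  have appr: "\<forall>f. (\<forall>n::nat. R (\<lambda>x. f x + (1/2)^n) (\<lambda>_. 0)) \<longrightarrow> R f (\<lambda>_. 0)"
  proof (intro allI impI)
    fix f :: "'a \<Rightarrow> real" assume H: "\<forall>n::nat. R (\<lambda>x. f x + (1/2)^n) (\<lambda>_. 0)"
    have le: "\<rho> f \<le> ereal ((1/2)^n)" for n :: nat
    proof -
      have "\<rho> (\<lambda>x. f x + (1/2)^n) \<le> 0" using H RR by simp
      moreover have "\<rho> f - ereal ((1/2)^n) \<le> \<rho> (\<lambda>x. f x + (1/2)^n)" by (rule cash) simp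
      ultimately have "\<rho> f - ereal ((1/2)^n) \<le> 0" by simp
      thus ?thesis by (cases "\<rho> f") auto
    qed
    have "\<rho> f \<le> 0"
    proof (cases "\<rho> f")
      case (real r)
      have "r \<le> 0"
      proof (rule ccontr)
        assume "\<not> r \<le> 0"
        then obtain n where "(1/2::real)^n < r" using real_arch_pow_inv[of r "1/2"] by auto
        with le[of n] real show False by simp
      qed
      thus ?thesis using real by simp
    next
      case PInf with le[of 0] show ?thesis by simp
    qed simp
    thus "R f (\<lambda>_. 0)" using RR by simp
  qed
  have rest: "\<forall>f A. R f (\<lambda>_. 0) \<longrightarrow> R (\<lambda>x. if x \<in> A then f x else 0) (\<lambda>_. 0)"
  proof (intro allI impI)
    fix f :: "'a \<Rightarrow> real" and A assume "R f (\<lambda>_. 0)"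
    hence "\<rho> f \<le> 0" using RR by simp
    have "\<rho> (\<lambda>x. min (if x \<in> A then f x else 0) 0) \<le> \<rho> (\<lambda>x. min (f x) 0)"
      by (rule mon) auto
    hence "\<rho> (\<lambda>x. if x \<in> A then f x else 0) \<le> \<rho> f" using mn by metis
    thus "R (\<lambda>x. if x \<in> A then f x else 0) (\<lambda>_. 0)" using RR \<open>\<rho> f \<le> 0\<close> by simp
  qed
  show ?thesis unfolding regular_stochastic_order_def
    by (intro conjI refl trans triv cone cert appr rest)
qed

locale rso =
  fixes R :: "('a \<Rightarrow> real) \<Rightarrow> ('a \<Rightarrow> real) \<Rightarrow> bool"
  assumes rso: "regular_stochastic_order R"
begin

lemmas parts = rso[unfolded regular_stochastic_order_def]

abbreviation P where "P f \<equiv> R f (\<lambda>_. 0)"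

lemma refl: "R f f" using conjunct1[OF parts] by blast
lemma trans: "R f g \<Longrightarrow> R g h \<Longrightarrow> R f h" using conjunct1[OF conjunct2[OF parts]] by blast
lemma triv: "\<not> R (\<lambda>_. 0) (\<lambda>_. 1)" using conjunct1[OF conjunct2[OF conjunct2[OF parts]]] by blast
lemma cone: "R f1 g1 \<Longrightarrow> R f2 g2 \<Longrightarrow> a1 \<ge> 0 \<Longrightarrow> a2 \<ge> 0 \<Longrightarrow>
        R (\<lambda>x. a1 * f1 x + a2 * f2 x) (\<lambda>x. a1 * g1 x + a2 * g2 x)"
  using conjunct1[OF conjunct2[OF conjunct2[OF conjunct2[OF parts]]]] by blast
lemma cert: "(\<And>x. f x \<ge> 0) \<Longrightarrow> P f" using conjunct1[OF conjunct2[OF conjunct2[OF conjunct2[OF conjunct2[OF parts]]]]] by blast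
lemma appr: "(\<And>n::nat. P (\<lambda>x. f x + (1/2)^n)) \<Longrightarrow> P f"
  using conjunct1[OF conjunct2[OF conjunct2[OF conjunct2[OF conjunct2[OF conjunct2[OF parts]]]]]] by blast
lemma rest: "P f \<Longrightarrow> P (\<lambda>x. if x \<in> A then f x else 0)"
  using conjunct2[OF conjunct2[OF conjunct2[OF conjunct2[OF conjunct2[OF conjunct2[OF parts]]]]]] by blast

lemma add: "R f1 g1 \<Longrightarrow> R f2 g2 \<Longrightarrow> R (\<lambda>x. f1 x + f2 x) (\<lambda>x. g1 x + g2 x)"
  using cone[of f1 g1 f2 g2 1 1] by simp

lemma padd: "P f \<Longrightarrow> P g \<Longrightarrow> P (\<lambda>x. f x + g x)"
  using add[of f "\<lambda>_. 0" g "\<lambda>_. 0"] by simp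

lemma pscale: "a \<ge> 0 \<Longrightarrow> P f \<Longrightarrow> P (\<lambda>x. a * f x)"
  using cone[of f "\<lambda>_. 0" "\<lambda>_. 0" "\<lambda>_. 0" a 0] refl by simp

lemma R_iff: "R f g \<longleftrightarrow> P (\<lambda>x. f x - g x)"
proof
  assume "R f g"
  from add[OF this refl[of "\<lambda>x. - g x"]] show "P (\<lambda>x. f x - g x)" by simp
next
  assume "P (\<lambda>x. f x - g x)"
  from add[OF this refl[of g]] show "R f g" by simp
qed

lemma pmono: "P f \<Longrightarrow> (\<And>x. f x \<le> g x) \<Longrightarrow> P g"
  using padd[of f "\<lambda>x. g x - f x"] cert[of "\<lambda>x. g x - f x"] by simp

lemma pmin: "P f \<longleftrightarrow> P (\<lambda>x. min (f x) 0)"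
proof
  assume "P f"
  have e: "(\<lambda>x. if x \<in> {x. f x < 0} then f x else 0) = (\<lambda>x. min (f x) 0)"
    by (auto simp: min_def fun_eq_iff)
  from rest[OF \<open>P f\<close>, of "{x. f x < 0}"] show "P (\<lambda>x. min (f x) 0)" by (simp only: e)
next
  assume "P (\<lambda>x. min (f x) 0)"
  have e: "(\<lambda>x. min (f x) 0 + max (f x) 0) = f"
    by (auto simp: min_def max_def fun_eq_iff)
  from padd[OF \<open>P (\<lambda>x. min (f x) 0)\<close> cert[of "\<lambda>x. max (f x) 0"]] show "P f" by (simp only: e)
qed

lemma not_m1: "\<not> P (\<lambda>_. -1)"
  using triv R_iff[of "\<lambda>_. 0" "\<lambda>_. 1"] by simp

definition S where "S f = {\<alpha>::real. \<alpha> \<ge> 0 \<and> P (\<lambda>x. f x + \<alpha>)}"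
definition rho :: "('a \<Rightarrow> real) \<Rightarrow> ereal" where "rho f = Inf (ereal ` S f)"

lemma rho_nonneg: "rho f \<ge> 0"
  unfolding rho_def S_def by (rule Inf_greatest) auto

lemma rho_le: assumes "t \<ge> 0" shows "rho f \<le> ereal t \<longleftrightarrow> P (\<lambda>x. f x + t)"
proof
  assume "P (\<lambda>x. f x + t)"
  hence "t \<in> S f" using assms by (simp add: S_def)
  thus "rho f \<le> ereal t" unfolding rho_def by (intro Inf_lower) auto
next
  assume H: "rho f \<le> ereal t"
  have "P (\<lambda>x. (f x + t) + (1/2)^n)" for n :: nat
  proof -
    have "rho f < ereal (t + (1/2)^n)" using H by (rule le_less_trans) simp
    then obtain a where a: "a \<in> S f" "ereal a < ereal (t + (1/2)^n)"
      unfolding rho_def by (auto simp: Inf_less_iff)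
    have "P (\<lambda>x. f x + a)" using a(1) by (simp add: S_def)
    moreover have "\<And>x. f x + a \<le> f x + t + (1/2)^n" using a(2) by simp
    ultimately show ?thesis by (rule pmono)
  qed
  thus "P (\<lambda>x. f x + t)" by (rule appr)
qed

lemma rho_eqI: assumes H: "\<And>t. t \<ge> 0 \<Longrightarrow> x \<le> ereal t \<longleftrightarrow> y \<le> ereal t" and "x \<ge> 0" "y \<ge> 0"
  shows "x = (y::ereal)"
proof (rule antisym)
  show "x \<le> y"
  proof (cases y)
    case (real r)
    hence "r \<ge> 0" using \<open>y \<ge> 0\<close> by simp
    from H[OF this] real show ?thesis by simp
  next
    case MInf thus ?thesis using \<open>y \<ge> 0\<close> by simp
  qed simp
  show "y \<le> x"
  proof (cases x)
    case (real r)
    hence "r \<ge> 0" using \<open>x \<ge> 0\<close> by simp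
    from H[OF this] real show ?thesis by simp
  next
    case MInf thus ?thesis using \<open>x \<ge> 0\<close> by simp
  qed simp
qed

lemma main: "coherent_cash_subadditive_loss_measure rho \<and> rho (\<lambda>_. -1) > 0 \<and>
        (\<forall>f g. R f g \<longleftrightarrow> rho (\<lambda>x. f x - g x) \<le> 0)"
proof -
  have hom: "rho (\<lambda>x. a * f x) = ereal a * rho f" if a: "a \<ge> 0" for f a
  proof (cases "a = 0")
    case True
    have "rho (\<lambda>x. 0) \<le> ereal 0" using rho_le[of 0 "\<lambda>x. 0"] refl by simp
    thus ?thesis using True rho_nonneg[of "\<lambda>x. 0"] by (simp add: zero_ereal_def[symmetric])
  next
    case False
    hence ap: "a > 0" using a by simp
    show ?thesis
    proof (rule rho_eqI)
      fix t :: real assume t: "t \<ge> 0"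
      have "rho (\<lambda>x. a * f x) \<le> ereal t \<longleftrightarrow> P (\<lambda>x. a * f x + t)" using rho_le t by simp
      also have "\<dots> \<longleftrightarrow> P (\<lambda>x. f x + t / a)"
      proof
        assume "P (\<lambda>x. a * f x + t)"
        from pscale[OF _ this, of "1/a"] ap have "P (\<lambda>x. 1/a * (a * f x + t))" by simp
        moreover have "(\<lambda>x. 1/a * (a * f x + t)) = (\<lambda>x. f x + t / a)"
          using ap by (simp add: fun_eq_iff field_simps)
        ultimately show "P (\<lambda>x. f x + t / a)" by simp
      next
        assume "P (\<lambda>x. f x + t / a)"
        from pscale[OF _ this, of a] ap have "P (\<lambda>x. a * (f x + t / a))" by simp
        moreover have "(\<lambda>x. a * (f x + t / a)) = (\<lambda>x. a * f x + t)"
          using ap by (simp add: fun_eq_iff algebra_simps)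
        ultimately show "P (\<lambda>x. a * f x + t)" by simp
      qed
      also have "\<dots> \<longleftrightarrow> rho f \<le> ereal (t / a)" using rho_le t ap by simp
      also have "\<dots> \<longleftrightarrow> ereal a * rho f \<le> ereal t"
        using rho_nonneg[of f] ap by (cases "rho f") (auto simp: field_simps)
      finally show "rho (\<lambda>x. a * f x) \<le> ereal t \<longleftrightarrow> ereal a * rho f \<le> ereal t" .
    qed (use rho_nonneg ap in \<open>auto\<close>)
  qed
  have sub: "rho (\<lambda>x. f x + g x) \<le> rho f + rho g" for f g
  proof (cases "rho f = \<infinity> \<or> rho g = \<infinity>")
    case True thus ?thesis using rho_nonneg[of f] rho_nonneg[of g] by auto
  next
    case False
    then obtain r s where rs: "rho f = ereal r" "rho g = ereal s"
      using rho_nonneg[of f] rho_nonneg[of g] by (cases "rho f"; cases "rho g") auto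
    hence r: "r \<ge> 0" "s \<ge> 0" using rho_nonneg[of f] rho_nonneg[of g] by auto
    have "P (\<lambda>x. f x + r)" "P (\<lambda>x. g x + s)"
      using rho_le[of r f] rho_le[of s g] r rs by auto
    from padd[OF this] have "P (\<lambda>x. (f x + g x) + (r + s))" by (simp add: algebra_simps)
    hence "rho (\<lambda>x. f x + g x) \<le> ereal (r + s)" using rho_le[of "r+s" "\<lambda>x. f x + g x"] r by simp
    thus ?thesis using rs by simp
  qed
  have mon: "rho g \<le> rho f" if "\<forall>x. f x \<le> g x" for f g
  proof (cases "rho f")
    case (real r)
    hence r: "r \<ge> 0" using rho_nonneg[of f] by simp
    hence "P (\<lambda>x. f x + r)" using rho_le[of r f] real by auto
    hence "P (\<lambda>x. g x + r)" by (rule pmono) (use that in auto)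
    thus ?thesis using rho_le[of r g] r real by simp
  qed (use rho_nonneg[of f] in auto)
  have cash: "rho (\<lambda>x. f x + \<alpha>) \<ge> rho f - ereal \<alpha>" if "\<alpha> \<ge> 0" for f \<alpha>
  proof (cases "rho (\<lambda>x. f x + \<alpha>)")
    case (real r)
    hence r: "r \<ge> 0" using rho_nonneg[of "\<lambda>x. f x + \<alpha>"] by simp
    hence "P (\<lambda>x. f x + (\<alpha> + r))" using rho_le[of r "\<lambda>x. f x + \<alpha>"] real by (simp add: add.assoc)
    hence "rho f \<le> ereal (\<alpha> + r)" using rho_le[of "\<alpha> + r" f] r that by simp
    thus ?thesis using real by (cases "rho f") auto
  qed (use rho_nonneg[of "\<lambda>x. f x + \<alpha>"] in auto)
  have mn: "rho f = rho (\<lambda>x. min (f x) 0)" for f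
  proof (rule rho_eqI)
    fix t :: real assume t: "t \<ge> 0"
    have e: "(\<lambda>x. min (f x + t) 0) = (\<lambda>x. min (min (f x) 0 + t) 0)" using t
      by (auto simp: min_def)
    have "rho f \<le> ereal t \<longleftrightarrow> P (\<lambda>x. f x + t)" using rho_le t by simp
    also have "\<dots> \<longleftrightarrow> P (\<lambda>x. min (f x + t) 0)" by (rule pmin)
    also have "\<dots> \<longleftrightarrow> P (\<lambda>x. min (min (f x) 0 + t) 0)" by (simp only: e)
    also have "\<dots> \<longleftrightarrow> P (\<lambda>x. min (f x) 0 + t)" by (rule pmin[symmetric])
    also have "\<dots> \<longleftrightarrow> rho (\<lambda>x. min (f x) 0) \<le> ereal t" using rho_le t by simp
    finally show "rho f \<le> ereal t \<longleftrightarrow> rho (\<lambda>x. min (f x) 0) \<le> ereal t" .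
  qed (use rho_nonneg in auto)
  have C: "coherent_cash_subadditive_loss_measure rho"
    unfolding coherent_cash_subadditive_loss_measure_def
    by (intro conjI allI impI hom sub mon cash mn) auto
  have "\<not> rho (\<lambda>_. -1) \<le> ereal 0" using rho_le[of 0 "\<lambda>_. -1"] not_m1 by simp
  hence pos: "rho (\<lambda>_. -1) > 0" by (simp add: zero_ereal_def not_le)
  have "R f g \<longleftrightarrow> rho (\<lambda>x. f x - g x) \<le> 0" for f g
    using rho_le[of 0 "\<lambda>x. f x - g x"] R_iff[of f g] by (simp add: zero_ereal_def)
  thus ?thesis using C pos by blast
qed

end

theorem theorem1:
  fixes R :: "('a \<Rightarrow> real) \<Rightarrow> ('a \<Rightarrow> real) \<Rightarrow> bool"
  shows "regular_stochastic_order R \<longleftrightarrow>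
    (\<exists>\<rho> :: ('a \<Rightarrow> real) \<Rightarrow> ereal.
        coherent_cash_subadditive_loss_measure \<rho> \<and> \<rho> (\<lambda>_. -1) > 0 \<and>
        (\<forall>f g. R f g \<longleftrightarrow> \<rho> (\<lambda>x. f x - g x) \<le> 0))"
proof
  assume "regular_stochastic_order R"
  then interpret rso R by unfold_locales
  show "\<exists>\<rho> :: ('a \<Rightarrow> real) \<Rightarrow> ereal.
        coherent_cash_subadditive_loss_measure \<rho> \<and> \<rho> (\<lambda>_. -1) > 0 \<and>
        (\<forall>f g. R f g \<longleftrightarrow> \<rho> (\<lambda>x. f x - g x) \<le> 0)" using main by blast
next
  assume "\<exists>\<rho> :: ('a \<Rightarrow> real) \<Rightarrow> ereal.
        coherent_cash_subadditive_loss_measure \<rho> \<and> \<rho> (\<lambda>_. -1) > 0 \<and>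
        (\<forall>f g. R f g \<longleftrightarrow> \<rho> (\<lambda>x. f x - g x) \<le> 0)"
  thus "regular_stochastic_order R" using dir2 by blast
qed

end
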